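(* For every integer $1\le m\le D-2$, the Markov chain on $\Sigma_m$ induced by the local automaton gate set $\mathcal G$ is irreducible: for any $S,S'\in\Sigma_m$ there is a finite sequence $u_1,\dots,u_\ell\in\mathcal G$ with $u_\ell\circ\cdots\circ u_1(S)=S'$.
   Context: Consider $N\ge3$ qubits on a ring (site indices modulo $N$), bitstrings $\mathbf z\in\{0,1\}^N$, $D=2^N$. The gate set is $\mathcal G=\{u_{iab}: i\in\{1,\dots,N\},\ a,b\in\{0,1\}\}$, where $u_{iab}$ is the permutation of $\{0,1\}^N$ that flips bit $i$ if and only if bit $i-1$ equals $a$ and bit $i+1$ equals $b$. $\Sigma_m$ is the set of subsets of $\{0,1\}^N$ of cardinality $m$, with $u(S)=\{u(\mathbf z):\mathbf z\in S\}$. The induced Markov chain has transition matrix $\Gamma_{S,S'}=\frac{1}{|\mathcal G|}\sum_{u\in\mathcal G}\delta_{S',u(S)}$. *)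

theory Defs
  imports Main
begin

text \<open>Bitstrings on a ring of N qubits are boolean lists of length N; sites are
  indexed 0..N-1 (0-based), neighbours taken modulo N.\<close>

definition bitstrings :: "nat \<Rightarrow> bool list set" where
  "bitstrings N = {z. length z = N}"

definition gate :: "nat \<Rightarrow> nat \<Rightarrow> bool \<Rightarrow> bool \<Rightarrow> bool list \<Rightarrow> bool list" where
  "gate N i a b z =
     (if z ! ((i + N - 1) mod N) = a \<and> z ! ((i + 1) mod N) = b
      then z[i := \<not> z ! i] else z)"

definition gate_set :: "nat \<Rightarrow> (nat \<times> bool \<times> bool) set" where
  "gate_set N = {(i, a, b). i < N}"

text \<open>Apply the gate sequence [u_1,...,u_l] in order: u_l o ... o u_1.\<close>
definition apply_gates :: "nat \<Rightarrow> (nat \<times> bool \<times> bool) list \<Rightarrow> bool list \<Rightarrow> bool list" where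
  "apply_gates N gs z = fold (\<lambda>(i, a, b) w. gate N i a b w) gs z"

definition Sigma_m :: "nat \<Rightarrow> nat \<Rightarrow> bool list set set" where
  "Sigma_m N m = {S. S \<subseteq> bitstrings N \<and> card S = m}"

end

theory Submission
  imports Defs
begin

definition lit :: "nat set \<Rightarrow> (nat \<Rightarrow> bool) \<Rightarrow> bool list \<Rightarrow> bool" where
  "lit P w z = (\<forall>p\<in>P. z ! p = w p)"

definition flip :: "nat \<Rightarrow> (bool list \<Rightarrow> bool) \<Rightarrow> bool list \<Rightarrow> bool list" where
  "flip i c z = (if c z then z[i := \<not> z ! i] else z)"

definition realz :: "nat \<Rightarrow> (bool list \<Rightarrow> bool list) \<Rightarrow> bool" where
  "realz N f = (\<exists>gs. set gs \<subseteq> gate_set N \<and> (\<forall>z. length z = N \<longrightarrow> apply_gates N gs z = f z))"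

definition LF :: "nat \<Rightarrow> nat \<Rightarrow> nat set \<Rightarrow> bool" where
  "LF N i P = (\<forall>w. realz N (flip i (lit P w)))"

lemma apply_gates_append: "apply_gates N (gs1 @ gs2) z = apply_gates N gs2 (apply_gates N gs1 z)"
  by (simp add: apply_gates_def)

lemma length_gate[simp]: "length (gate N i a b z) = length z"
  by (simp add: gate_def)

lemma length_apply[simp]: "length (apply_gates N gs z) = length z"
  by (induction gs arbitrary: z) (auto simp: apply_gates_def)

lemma realz_length: "realz N f \<Longrightarrow> length z = N \<Longrightarrow> length (f z) = N"
  unfolding realz_def by (metis length_apply)

lemma realz_comp: assumes "realz N f" "realz N g" shows "realz N (\<lambda>z. g (f z))"
proof -
  obtain gs1 where 1: "set gs1 \<subseteq> gate_set N" "\<forall>z. length z = N \<longrightarrow> apply_gates N gs1 z = f z"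
    using assms(1) unfolding realz_def by blast
  obtain gs2 where 2: "set gs2 \<subseteq> gate_set N" "\<forall>z. length z = N \<longrightarrow> apply_gates N gs2 z = g z"
    using assms(2) unfolding realz_def by blast
  show ?thesis unfolding realz_def
    apply (rule exI[of _ "gs1 @ gs2"])
    using 1 2 by (auto simp: apply_gates_append) (metis length_apply)
qed

lemma realz_cong: "realz N f \<Longrightarrow> (\<And>z. length z = N \<Longrightarrow> f z = g z) \<Longrightarrow> realz N g"
  unfolding realz_def by metis

lemma realz_gate: "i < N \<Longrightarrow> realz N (gate N i a b)"
  unfolding realz_def
  by (rule exI[of _ "[(i,a,b)]"]) (auto simp: gate_set_def apply_gates_def)

lemma lit_upd[simp]: "i \<notin> P \<Longrightarrow> lit P w (z[i := b]) = lit P w z"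
  unfolding lit_def by (metis nth_list_update_neq)

lemma lit_insert[simp]: "lit (insert j P) w z = (z ! j = w j \<and> lit P w z)"
  unfolding lit_def by auto

lemma lit_Un[simp]: "lit (P \<union> Q) w z = (lit P w z \<and> lit Q w z)"
  unfolding lit_def by auto

lemma lit_empty[simp]: "lit {} w z"
  unfolding lit_def by auto

lemma flip_xor:
  assumes "i < length z" "\<And>u b. c (u[i:=b]) = c u"
  shows "flip i c (flip i d z) = flip i (\<lambda>u. c u \<noteq> d u) z"
  using assms unfolding flip_def by auto

lemma upd_same2: "z ! j = b \<Longrightarrow> z[j := b, i := x] = z[i := x]"
  by (metis list_update_id)

lemma upd_3: "i \<noteq> j \<Longrightarrow> z[j := a, i := x, j := b] = z[j := b, i := x]"
  by (metis list_update_overwrite list_update_swap)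

lemma comb_pt:
  assumes "i \<noteq> j" "i < length z" "j < length z"
  and ci: "\<And>u b. c (u[i:=b]) = c u" and cj: "\<And>u b. c (u[j:=b]) = c u"
  and di: "\<And>u b. d (u[i:=b]) = d u" and dj: "\<And>u b. d (u[j:=b]) = d u"
  shows "flip i (\<lambda>u. u!j = v \<and> c u) (flip j d (flip i (\<lambda>u. u!j = v \<and> c u) (flip j d z)))
         = flip i (\<lambda>u. c u \<and> d u) z"
  using assms unfolding flip_def
  by (auto simp: nth_list_update list_update_same_conv upd_3 upd_same2)

lemma LF_comb:
  assumes X: "LF N i (insert j P)" and Y: "LF N j Q" and "i \<noteq> j" "i \<notin> P" "j \<notin> P"
    "i \<notin> Q" "j \<notin> Q" "i < N" "j < N"
  shows "LF N i (P \<union> Q)"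
  unfolding LF_def
proof
  fix w
  let ?X = "flip i (lit (insert j P) w)" and ?Y = "flip j (lit Q w)"
  have rX: "realz N ?X" and rY: "realz N ?Y" using X Y unfolding LF_def by auto
  have "realz N (\<lambda>z. ?X (?Y (?X (?Y z))))"
    using realz_comp[OF realz_comp[OF realz_comp[OF rY rX] rY] rX] .
  have e: "lit (insert j P) w = (\<lambda>u. u!j = w j \<and> lit P w u)" by (rule ext) simp
  have e2: "lit (P \<union> Q) w = (\<lambda>u. lit P w u \<and> lit Q w u)" by (rule ext) simp
  have "?X (?Y (?X (?Y z))) = flip i (lit (P \<union> Q) w) z" if "length z = N" for z
  proof -
    have "?X (?Y (?X (?Y z))) = flip i (\<lambda>u. lit P w u \<and> lit Q w u) z"
      unfolding e by (rule comb_pt) (use assms that in simp_all)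
    then show ?thesis by (simp add: e2)
  qed
  with \<open>realz N (\<lambda>z. ?X (?Y (?X (?Y z))))\<close> show "realz N (flip i (lit (P \<union> Q) w))"
    by (rule realz_cong)
qed

lemma LF_base:
  assumes "i < N"
  shows "LF N i {(i + N - 1) mod N, (i + 1) mod N}"
  unfolding LF_def
proof
  fix w
  define im where "im = (i + N - 1) mod N"
  define ip where "ip = (i + 1) mod N"
  have "realz N (gate N i (w im) (w ip))" using assms by (rule realz_gate)
  then show "realz N (flip i (lit {im, ip} w))"
    by (rule realz_cong) (unfold gate_def flip_def lit_def im_def[symmetric] ip_def[symmetric], simp)
qed

lemma mod_ne: assumes "(i::nat) < N" "0 < d" "d < N" shows "(i + d) mod N \<noteq> i"
proof (cases "i + d < N")
  case True then show ?thesis using assms by simp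
next
  case False
  then have "(i + d) mod N = i + d - N" using assms by (simp add: mod_if)
  moreover have "i + d - N \<noteq> i" using assms False by arith
  ultimately show ?thesis by simp
qed

lemma nbrs:
  assumes "3 \<le> (N::nat)" "i < N"
  shows "(i + N - 1) mod N \<noteq> i" "(i + 1) mod N \<noteq> i"
    "(i + N - 1) mod N \<noteq> (i + 1) mod N" "(i + N - 1) mod N < N" "(i + 1) mod N < N"
proof -
  have "(i + (N - 1)) mod N \<noteq> i" by (rule mod_ne) (use assms in auto)
  then show "(i + N - 1) mod N \<noteq> i" using assms by simp
  show "(i + 1) mod N \<noteq> i" by (rule mod_ne) (use assms in auto)
  have e: "(i + N - 1) mod N = ((i + 1) mod N + (N - 2)) mod N"
  proof -
    have "((i + 1) mod N + (N - 2)) mod N = (i + 1 + (N - 2)) mod N" by (rule mod_add_left_eq)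
    moreover have "i + 1 + (N - 2) = i + N - 1" using assms by simp
    ultimately show ?thesis by metis
  qed
  have "((i + 1) mod N + (N - 2)) mod N \<noteq> (i + 1) mod N" by (rule mod_ne) (use assms in auto)
  then show "(i + N - 1) mod N \<noteq> (i + 1) mod N" using e by simp
  show "(i + N - 1) mod N < N" "(i + 1) mod N < N" using assms by auto
qed

lemma LF_ip:
  assumes "3 \<le> (N::nat)" "i < N"
  shows "LF N i {(i + 1) mod N}"
  unfolding LF_def
proof
  fix w
  define im where "im = (i + N - 1) mod N"
  define ip where "ip = (i + 1) mod N"
  have nb: "im \<noteq> i" "ip \<noteq> i" "im \<noteq> ip" using nbrs[OF assms] unfolding im_def ip_def by auto
  have B: "LF N i {im, ip}" using LF_base[OF assms(2)] unfolding im_def ip_def .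
  let ?X = "flip i (lit {im, ip} w)" and ?Y = "flip i (lit {im, ip} (w(im := \<not> w im)))"
  have "realz N (\<lambda>z. ?X (?Y z))" using B unfolding LF_def by (blast intro: realz_comp)
  moreover have "?X (?Y z) = flip i (lit {ip} w) z" if "length z = N" for z
  proof -
    have "?X (?Y z) = flip i (\<lambda>u. lit {im, ip} w u \<noteq> lit {im, ip} (w(im := \<not> w im)) u) z"
      by (rule flip_xor) (use that assms nb in auto)
    also have "\<dots> = flip i (lit {ip} w) z"
      using nb by (auto simp: flip_def)
    finally show ?thesis .
  qed
  ultimately show "realz N (flip i (lit {ip} w))" by (rule realz_cong)
qed

lemma LF_chain:
  assumes "3 \<le> (N::nat)" "i < N"
  shows "0 < d \<Longrightarrow> d < N \<Longrightarrow> LF N i {(i + d) mod N}"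
proof (induction d)
  case 0 then show ?case by simp
next
  case (Suc d)
  show ?case
  proof (cases "d = 0")
    case True then show ?thesis using LF_ip[OF assms] by simp
  next
    case False
    define j where "j = (i + d) mod N"
    have IH: "LF N i (insert j {})" using Suc False unfolding j_def by simp
    have jN: "j < N" unfolding j_def using assms by simp
    have Y: "LF N j {(j + 1) mod N}" by (rule LF_ip[OF assms(1) jN])
    have jq: "(j + 1) mod N = (i + Suc d) mod N" unfolding j_def by (simp add: mod_Suc_eq)
    have "LF N i ({} \<union> {(j + 1) mod N})"
    proof (rule LF_comb[OF IH Y])
      show "i \<noteq> j" unfolding j_def using mod_ne[of i N d] assms Suc False by auto
      show "i \<notin> {(j + 1) mod N}" unfolding jq using mod_ne[of i N "Suc d"] assms Suc by auto
      show "j \<notin> {(j + 1) mod N}" using mod_ne[of j N 1] assms jN by auto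
    qed (use assms jN in auto)
    then show ?thesis using jq by simp
  qed
qed

lemma LF_single:
  assumes "3 \<le> (N::nat)" "i < N" "q < N" "q \<noteq> i"
  shows "LF N i {q}"
proof (cases "i < q")
  case True
  have "LF N i {(i + (q - i)) mod N}" by (rule LF_chain) (use assms True in auto)
  then show ?thesis using True assms by simp
next
  case False
  have "LF N i {(i + (q + N - i)) mod N}" by (rule LF_chain) (use assms False in auto)
  moreover have "(i + (q + N - i)) mod N = q" using False assms by simp
  ultimately show ?thesis by simp
qed

lemma LF_pair:
  assumes "3 \<le> (N::nat)" "i < N" "p < N" "q < N" "p \<noteq> i" "q \<noteq> i"
  shows "LF N i {p, q}"
proof -
  define im where "im = (i + N - 1) mod N"
  define ip where "ip = (i + 1) mod N"
  have nb: "im \<noteq> i" "ip \<noteq> i" "im \<noteq> ip" "im < N" "ip < N"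
    using nbrs[OF assms(1,2)] unfolding im_def ip_def by auto
  have B: "LF N i (insert ip {im})" using LF_base[OF assms(2)] unfolding im_def ip_def
    by (simp add: insert_commute)
  have A: "LF N i {im, r}" if "r < N" "r \<noteq> i" for r
  proof (cases "r = ip")
    case True then show ?thesis using B by (simp add: insert_commute)
  next
    case False
    have "LF N i ({im} \<union> {r})"
      by (rule LF_comb[OF B LF_single[OF assms(1) nb(5) that(1) False]]) (use nb that assms False in auto)
    then show ?thesis by (simp add: insert_commute)
  qed
  show ?thesis
  proof (cases "p = im \<or> q = im")
    case True
    then show ?thesis
    proof
      assume "p = im" then show ?thesis using A[OF assms(4,6)] by simp
    next
      assume "q = im" then show ?thesis using A[OF assms(3,5)] by (metis insert_commute)
    qed
  next
    case False
    then have pim: "p \<noteq> im" by auto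
    have "LF N i ({q} \<union> {p})"
      by (rule LF_comb[OF A[OF assms(4,6)] LF_single[OF assms(1) nb(4) assms(3) pim]])
         (use nb False assms in auto)
    then show ?thesis by (simp add: insert_commute)
  qed
qed

lemma LF_big:
  assumes N3: "3 \<le> (N::nat)" and n2: "2 \<le> n"
  shows "n + 2 \<le> N \<longrightarrow> (\<forall>i P. i < N \<longrightarrow> P \<subseteq> {..<N} \<longrightarrow> i \<notin> P \<longrightarrow> card P = n \<longrightarrow> LF N i P)"
  using n2
proof (induction n rule: nat_induct_at_least)
  case base
  show ?case
  proof (intro impI allI)
    fix i P assume "i < N" "P \<subseteq> {..<N}" "i \<notin> P" "card P = 2"
    then obtain p q where "P = {p, q}" "p \<noteq> q" by (auto simp: card_2_iff)
    then show "LF N i P" using LF_pair[OF N3 \<open>i < N\<close>, of p q] \<open>P \<subseteq> {..<N}\<close> \<open>i \<notin> P\<close> by auto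
  qed
next
  case (Suc n)
  show ?case
  proof (intro impI allI)
    fix i P assume le: "Suc n + 2 \<le> N" and iN: "i < N" and PN: "P \<subseteq> {..<N}" and iP: "i \<notin> P"
      and cP: "card P = Suc n"
    have fP: "finite P" using PN finite_subset by blast
    obtain p where pP: "p \<in> P" using cP by (metis card.empty ex_in_conv nat.distinct(1))
    define B where "B = P - {p}"
    have cB: "card B = n" unfolding B_def using cP pP fP by simp
    have "\<not> {..<N} \<subseteq> insert i P"
    proof
      assume "{..<N} \<subseteq> insert i P"
      then have "card {..<N} \<le> card (insert i P)" using fP by (intro card_mono) auto
      then show False using cP iP fP le by simp
    qed
    then obtain j where jN: "j < N" and jP: "j \<notin> insert i P" by auto
    have X: "LF N i (insert j {p})"
      using LF_pair[OF N3 iN jN, of p] pP PN iP jP by (auto simp: insert_commute)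
    have IH: "\<forall>i P. i < N \<longrightarrow> P \<subseteq> {..<N} \<longrightarrow> i \<notin> P \<longrightarrow> card P = n \<longrightarrow> LF N i P"
      using Suc.IH le by simp
    have "B \<subseteq> {..<N}" "j \<notin> B" using PN jP unfolding B_def by auto
    then have Y: "LF N j B" using IH jN cB by blast
    have "LF N i ({p} \<union> B)"
      by (rule LF_comb[OF X Y]) (use iN jN jP pP iP in \<open>auto simp: B_def\<close>)
    moreover have "{p} \<union> B = P" unfolding B_def using pP by auto
    ultimately show "LF N i P" by simp
  qed
qed

definition cyc3 :: "'a \<Rightarrow> 'a \<Rightarrow> 'a \<Rightarrow> 'a \<Rightarrow> 'a" where
  "cyc3 a b c v = (if v = a then b else if v = b then c else if v = c then a else v)"

lemma cyc_pt:
  assumes lx: "length x = N" and lv: "length v = N" and ij: "i < N" "j < N" "i \<noteq> j"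
    and PA: "j \<in> PA" "i \<notin> PA" and PB: "i \<in> PB" "j \<notin> PB"
    and cov: "\<And>p. p < N \<Longrightarrow> p \<noteq> i \<Longrightarrow> p \<noteq> j \<Longrightarrow> p \<in> PA \<or> p \<in> PB"
  shows "flip i (lit PA (\<lambda>p. x!p)) (flip j (lit PB (\<lambda>p. x!p)) (flip i (lit PA (\<lambda>p. x!p))
           (flip j (lit PB (\<lambda>p. x!p)) v))) = cyc3 x (x[i:=\<not>x!i]) (x[j:=\<not>x!j]) v"
    and "flip j (lit PB (\<lambda>p. x!p)) (flip i (lit PA (\<lambda>p. x!p)) (flip j (lit PB (\<lambda>p. x!p))
           (flip i (lit PA (\<lambda>p. x!p)) v))) = cyc3 x (x[j:=\<not>x!j]) (x[i:=\<not>x!i]) v"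
proof -
  define w where "w = (\<lambda>p. x!p)"
  define QA where "QA = PA - {j}"
  define QB where "QB = PB - {i}"
  have iQ: "i \<notin> QA" "j \<notin> QA" "i \<notin> QB" "j \<notin> QB" using PA PB unfolding QA_def QB_def by auto
  have eA: "lit PA w = (\<lambda>u. u!j = x!j \<and> lit QA w u)"
  proof -
    have "PA = insert j QA" using PA unfolding QA_def by auto
    then show ?thesis unfolding w_def by (auto simp: fun_eq_iff)
  qed
  have eB: "lit PB w = (\<lambda>u. u!i = x!i \<and> lit QB w u)"
  proof -
    have "PB = insert i QB" using PB unfolding QB_def by auto
    then show ?thesis unfolding w_def by (auto simp: fun_eq_iff)
  qed
  have lxA: "lit QA w x" and lxB: "lit QB w x" unfolding w_def lit_def by auto
  define y where "y = x[i:=\<not>x!i]"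
  define zz where "zz = x[j:=\<not>x!j]"
  have lyA: "lit QA w y" "lit QA w zz" "lit QB w y" "lit QB w zz"
    unfolding y_def zz_def using lxA lxB iQ by auto
  let ?A = "flip i (lit PA w)" and ?B = "flip j (lit PB w)"
  have "?A (?B (?A (?B v))) = cyc3 x y zz v \<and> ?B (?A (?B (?A v))) = cyc3 x zz y v"
  proof (cases "lit QA w v \<and> lit QB w v")
    case False
    have invB: "?B (?B u) = u" if "length u = N" for u
      unfolding flip_def using iQ ij that PB by (auto simp: list_update_same_conv)
    have invA: "?A (?A u) = u" if "length u = N" for u
      unfolding flip_def using iQ ij that PA by (auto simp: list_update_same_conv)
    have lB: "lit QA w (?B u) = lit QA w u" "lit QB w (?B u) = lit QB w u" for u
      unfolding flip_def using iQ by auto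
    have lA: "lit QA w (?A u) = lit QA w u" "lit QB w (?A u) = lit QB w u" for u
      unfolding flip_def using iQ by auto
    have cv: "cyc3 x y zz v = v" "cyc3 x zz y v = v"
      unfolding cyc3_def using False lyA lxA lxB by auto
    show ?thesis
    proof (cases "lit QA w v")
      case False
      have fA: "?A u = u" if "lit QA w u = lit QA w v" for u
        unfolding flip_def using False that eA by auto
      show ?thesis using cv fA lB invB lv by simp
    next
      case True
      then have F: "\<not> lit QB w v" using \<open>\<not> (lit QA w v \<and> lit QB w v)\<close> by auto
      have fB: "?B u = u" if "lit QB w u = lit QB w v" for u
        unfolding flip_def using F that eB by auto
      show ?thesis using cv fB lA invA lv by simp
    qed
  next
    case True
    define U where "U a b = x[i:=a, j:=b]" for a b
    have Ui: "U a b ! i = a" and Uj: "U a b ! j = b" for a b unfolding U_def using lx ij by auto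
    have Uui: "(U a b)[i := c] = U c b" and Uuj: "(U a b)[j := c] = U a c" for a b c
      unfolding U_def using ij by (auto simp: list_update_swap)
    have Uinj: "U a b = U a' b' \<longleftrightarrow> a = a' \<and> b = b'" for a b a' b'
    proof
      assume "U a b = U a' b'"
      then have "U a b ! i = U a' b' ! i" "U a b ! j = U a' b' ! j" by simp_all
      then show "a = a' \<and> b = b'" by (simp add: Ui Uj)
    qed simp
    have UA: "lit QA w (U a b)" and UB: "lit QB w (U a b)" for a b
      unfolding U_def using lxA lxB iQ by auto
    have xU: "x = U (x!i) (x!j)" unfolding U_def by simp
    have yU: "y = U (\<not>x!i) (x!j)" unfolding U_def y_def using ij by (metis list_update_id nth_list_update_neq)
    have zU: "zz = U (x!i) (\<not>x!j)" unfolding U_def zz_def using ij by (simp add: list_update_swap)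
    have vU: "v = U (v!i) (v!j)"
    proof (rule nth_equalityI)
      show "length v = length (U (v!i) (v!j))" unfolding U_def using lx lv by simp
      fix p assume "p < length v"
      then show "v ! p = U (v!i) (v!j) ! p"
      proof (cases "p = i \<or> p = j")
        case True then show ?thesis using ij lx lv unfolding U_def by (auto simp: nth_list_update)
      next
        case F: False
        then have "v ! p = x ! p"
          using True cov[of p] lv \<open>p < length v\<close> unfolding lit_def w_def QA_def QB_def by auto
        then show ?thesis using F unfolding U_def by simp
      qed
    qed
    have fA: "?A (U a b) = (if b = x!j then U (\<not>a) b else U a b)" for a b
      by (simp add: eA flip_def Ui Uj Uui UA)
    have fB: "?B (U a b) = (if a = x!i then U a (\<not>b) else U a b)" for a b
      by (simp add: eB flip_def Ui Uj Uuj UB)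
    have key: "?A (?B (?A (?B (U a b)))) = cyc3 (U (x!i) (x!j)) (U (\<not>x!i) (x!j)) (U (x!i) (\<not>x!j)) (U a b)
      \<and> ?B (?A (?B (?A (U a b)))) = cyc3 (U (x!i) (x!j)) (U (x!i) (\<not>x!j)) (U (\<not>x!i) (x!j)) (U a b)" for a b
      by (cases a; cases b; cases "x!i"; cases "x!j") (simp_all add: fA fB cyc3_def Uinj)
    show ?thesis
      using key[of "v!i" "v!j"] by (simp only: vU[symmetric] xU[symmetric] yU[symmetric] zU[symmetric])
  qed
  then show "?A (?B (?A (?B v))) = cyc3 x (x[i:=\<not>x!i]) (x[j:=\<not>x!j]) v"
    and "?B (?A (?B (?A v))) = cyc3 x (x[j:=\<not>x!j]) (x[i:=\<not>x!i]) v"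
    unfolding y_def zz_def w_def by auto
qed

lemma im_ne_l:
  assumes "4 \<le> (N::nat)" "i < N"
  shows "(i + N - 1) mod N \<noteq> (i + 2) mod N"
proof -
  have "((i + N - 1) mod N + 3) mod N = (i + N - 1 + 3) mod N" by (rule mod_add_left_eq)
  also have "i + N - 1 + 3 = (i + 2) + N" using assms by simp
  also have "((i + 2) + N) mod N = (i + 2) mod N" by (rule mod_add_self2)
  finally have e: "((i + N - 1) mod N + 3) mod N = (i + 2) mod N" .
  have "((i + N - 1) mod N + 3) mod N \<noteq> (i + N - 1) mod N"
    by (rule mod_ne) (use assms in auto)
  then show ?thesis using e by simp
qed

lemma cyc_real:
  assumes N3: "3 \<le> (N::nat)" and iN: "i < N" and lx: "length x = N"
  shows "realz N (cyc3 x (x[i:=\<not>x!i]) (x[(i+1) mod N:=\<not>x!((i+1) mod N)]))"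
    and "realz N (cyc3 x (x[(i+1) mod N:=\<not>x!((i+1) mod N)]) (x[i:=\<not>x!i]))"
proof -
  define j where "j = (i + 1) mod N"
  define im where "im = (i + N - 1) mod N"
  have nb: "im \<noteq> i" "j \<noteq> i" "im \<noteq> j" "im < N" "j < N"
    using nbrs[OF N3 iN] unfolding im_def j_def by auto
  obtain PA PB where LA: "LF N i PA" and LB: "LF N j PB" and PA: "j \<in> PA" "i \<notin> PA"
    and PB: "i \<in> PB" "j \<notin> PB"
    and cov: "\<And>p. p < N \<Longrightarrow> p \<noteq> i \<Longrightarrow> p \<noteq> j \<Longrightarrow> p \<in> PA \<or> p \<in> PB"
  proof (cases "N = 3")
    case True
    have LA: "LF N i {im, j}" using LF_base[OF iN] unfolding im_def j_def .
    have LB: "LF N j {i, im}" by (rule LF_pair) (use N3 nb iN in auto)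
    have cov3: "p \<in> {im, j} \<or> p \<in> {i, im}" if "p < N" "p \<noteq> i" "p \<noteq> j" for p
    proof -
      have "i = 0 \<or> i = 1 \<or> i = 2" using iN True by auto
      moreover have "p = 0 \<or> p = 1 \<or> p = 2" using that True by auto
      ultimately show ?thesis using that unfolding im_def j_def True by auto
    qed
    show ?thesis
    proof (rule that[OF LA LB])
      show "j \<in> {im, j}" "i \<in> {i, im}" by simp_all
      show "i \<notin> {im, j}" "j \<notin> {i, im}" using nb by auto
      show "p \<in> {im, j} \<or> p \<in> {i, im}" if "p < N" "p \<noteq> i" "p \<noteq> j" for p
        using cov3 that by blast
    qed
  next
    case False
    then have N4: "4 \<le> N" using N3 by simp
    define l where "l = (j + 1) mod N"
    have l2: "l = (i + 2) mod N" unfolding l_def j_def by (simp add: mod_Suc_eq)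
    have nl: "l \<noteq> j" "l \<noteq> i" "im \<noteq> l" "l < N"
      using nbrs[OF N3 nb(5)] mod_ne[OF iN, of 2] N3 im_ne_l[OF N4 iN]
      unfolding l_def[symmetric] l2 im_def by auto
    define PA where "PA = {..<N} - {i, im}"
    define PB where "PB = {..<N} - {j, l}"
    have cA: "card PA = N - 2" unfolding PA_def using nb iN by (simp add: card_Diff_subset)
    have cB: "card PB = N - 2" unfolding PB_def using nb nl by (simp add: card_Diff_subset)
    have big: "\<forall>i P. i < N \<longrightarrow> P \<subseteq> {..<N} \<longrightarrow> i \<notin> P \<longrightarrow> card P = N - 2 \<longrightarrow> LF N i P"
      using LF_big[OF N3, of "N - 2"] N4 by auto
    have LA: "LF N i PA" using big iN cA unfolding PA_def by auto
    have LB: "LF N j PB" using big nb cB unfolding PB_def by auto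
    show ?thesis
    proof (rule that[OF LA LB])
      show "j \<in> PA" "i \<notin> PA" "i \<in> PB" "j \<notin> PB" using nb nl iN unfolding PA_def PB_def by auto
      show "p \<in> PA \<or> p \<in> PB" if "p < N" "p \<noteq> i" "p \<noteq> j" for p
        using that nl unfolding PA_def PB_def by auto
    qed
  qed
  define w where "w = (\<lambda>p. x ! p)"
  let ?A = "flip i (lit PA w)" and ?B = "flip j (lit PB w)"
  have rA: "realz N ?A" and rB: "realz N ?B" using LA LB unfolding LF_def by auto
  have r1: "realz N (\<lambda>v. ?A (?B (?A (?B v))))"
    using realz_comp[OF realz_comp[OF realz_comp[OF rB rA] rB] rA] .
  have r2: "realz N (\<lambda>v. ?B (?A (?B (?A v))))"
    using realz_comp[OF realz_comp[OF realz_comp[OF rA rB] rA] rB] .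
  show "realz N (cyc3 x (x[i:=\<not>x!i]) (x[(i+1) mod N:=\<not>x!((i+1) mod N)]))"
    using r1 unfolding j_def[symmetric]
    by (rule realz_cong) (unfold w_def, rule cyc_pt(1)[OF lx _ iN nb(5) nb(2)[symmetric] PA PB cov], auto)
  show "realz N (cyc3 x (x[(i+1) mod N:=\<not>x!((i+1) mod N)]) (x[i:=\<not>x!i]))"
    using r2 unfolding j_def[symmetric]
    by (rule realz_cong) (unfold w_def, rule cyc_pt(2)[OF lx _ iN nb(5) nb(2)[symmetric] PA PB cov], auto)
qed

definition reach :: "nat \<Rightarrow> bool list set \<Rightarrow> bool list set \<Rightarrow> bool" where
  "reach N S T = (\<exists>gs. set gs \<subseteq> gate_set N \<and> apply_gates N gs ` S = T)"

lemma reach_refl: "reach N S S"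
  unfolding reach_def by (rule exI[of _ "[]"]) (simp add: apply_gates_def)

lemma reach_trans: "reach N S T \<Longrightarrow> reach N T U \<Longrightarrow> reach N S U"
  unfolding reach_def
  by (metis (no_types, lifting) Un_subset_iff apply_gates_append image_cong image_image set_append)

lemma realz_reach: "realz N f \<Longrightarrow> S \<subseteq> bitstrings N \<Longrightarrow> reach N S (f ` S)"
  unfolding realz_def reach_def bitstrings_def by (auto intro!: image_cong)

lemma cyc3_img1:
  assumes "x \<in> S" "y \<notin> S" "z \<notin> S" "z \<noteq> y"
  shows "cyc3 x y z ` S = insert y (S - {x})"
proof
  show "cyc3 x y z ` S \<subseteq> insert y (S - {x})" using assms unfolding cyc3_def by auto
  show "insert y (S - {x}) \<subseteq> cyc3 x y z ` S"
  proof
    fix u assume u: "u \<in> insert y (S - {x})"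
    show "u \<in> cyc3 x y z ` S"
    proof (cases "u = y")
      case True then show ?thesis using assms by (auto simp: cyc3_def image_iff intro!: bexI[of _ x])
    next
      case False
      then have "u \<in> S" "u \<noteq> x" "u \<noteq> z" using u assms by auto
      then have "cyc3 x y z u = u" using False by (simp add: cyc3_def)
      then show ?thesis using \<open>u \<in> S\<close> by (metis image_eqI)
    qed
  qed
qed

lemma cyc3_img2:
  assumes "x \<in> S" "y \<notin> S" "z \<in> S" "z \<noteq> x"
  shows "cyc3 x z y ` S = insert y (S - {x})"
proof
  show "cyc3 x z y ` S \<subseteq> insert y (S - {x})" using assms unfolding cyc3_def by auto
  show "insert y (S - {x}) \<subseteq> cyc3 x z y ` S"
  proof
    fix u assume u: "u \<in> insert y (S - {x})"
    show "u \<in> cyc3 x z y ` S"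
    proof (cases "u = y")
      case True
      have "cyc3 x z y z = y" using assms by (auto simp: cyc3_def)
      then show ?thesis using True assms by (metis image_eqI)
    next
      case False
      then have uS: "u \<in> S" "u \<noteq> x" using u by auto
      show ?thesis
      proof (cases "u = z")
        case True
        have "cyc3 x z y x = z" by (simp add: cyc3_def)
        then show ?thesis using True assms by (metis image_eqI)
      next
        case F2: False
        then have "cyc3 x z y u = u" using False uS by (simp add: cyc3_def)
        then show ?thesis using uS by (metis image_eqI)
      qed
    qed
  qed
qed

lemma move_adj:
  assumes N3: "3 \<le> N" and SB: "S \<subseteq> bitstrings N" and xS: "x \<in> S" and yS: "y \<notin> S"
    and iN: "i < N" and y: "y = x[i := \<not> x ! i]"
  shows "reach N S (insert y (S - {x}))"
proof -
  have lx: "length x = N" using SB xS unfolding bitstrings_def by auto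
  define j where "j = (i + 1) mod N"
  define z where "z = x[j := \<not> x ! j]"
  have jN: "j < N" and ji: "j \<noteq> i" using nbrs[OF N3 iN] unfolding j_def by auto
  have zx: "z \<noteq> x" unfolding z_def using jN lx by (metis list_update_same_conv)
  have zy: "z \<noteq> y"
  proof
    assume "z = y"
    then have "z ! j = y ! j" by simp
    then show False unfolding z_def y using jN lx ji by simp
  qed
  show ?thesis
  proof (cases "z \<in> S")
    case False
    have "reach N S (cyc3 x y z ` S)"
      using realz_reach[OF cyc_real(1)[OF N3 iN lx] SB] unfolding y z_def j_def .
    then show ?thesis using cyc3_img1[OF xS yS False zy] by simp
  next
    case True
    have "reach N S (cyc3 x z y ` S)"
      using realz_reach[OF cyc_real(2)[OF N3 iN lx] SB] unfolding y z_def j_def .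
    then show ?thesis using cyc3_img2[OF xS yS True zx] by simp
  qed
qed

lemma move_gen:
  assumes N3: "3 \<le> N"
  shows "S \<subseteq> bitstrings N \<Longrightarrow> x \<in> S \<Longrightarrow> y \<notin> S \<Longrightarrow> length y = N
    \<Longrightarrow> reach N S (insert y (S - {x}))"
proof (induction "card {p. p < N \<and> x!p \<noteq> y!p}" arbitrary: x S rule: less_induct)
  case less
  have lx: "length x = N" using less.prems unfolding bitstrings_def by auto
  have "x \<noteq> y" using less.prems by auto
  have "\<exists>i<N. x ! i \<noteq> y ! i"
  proof (rule ccontr)
    assume "\<not> (\<exists>i<N. x ! i \<noteq> y ! i)"
    then have "x = y" using lx less.prems(4) by (intro nth_equalityI) auto
    with \<open>x \<noteq> y\<close> show False ..
  qed
  then obtain i where iN: "i < N" and xi: "x ! i \<noteq> y ! i" by blast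
  define w where "w = x[i := \<not> x ! i]"
  have lw: "length w = N" unfolding w_def using lx by simp
  have wi: "w ! i = y ! i" unfolding w_def using iN lx xi by simp
  have wset: "{p. p < N \<and> w!p \<noteq> y!p} = {p. p < N \<and> x!p \<noteq> y!p} - {i}"
    unfolding w_def using iN lx xi by (auto simp: nth_list_update)
  have lt: "card {p. p < N \<and> w!p \<noteq> y!p} < card {p. p < N \<and> x!p \<noteq> y!p}"
    unfolding wset using iN xi by (intro card_Diff1_less) auto
  have wx: "w \<noteq> x" using wi xi by auto
  show ?case
  proof (cases "w = y")
    case True
    show ?thesis by (rule move_adj[OF N3 less.prems(1,2,3) iN]) (use True w_def in simp)
  next
    case wy: False
    show ?thesis
    proof (cases "w \<in> S")
      case False
      define S1 where "S1 = insert w (S - {x})"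
      have r1: "reach N S S1" unfolding S1_def
        by (rule move_adj[OF N3 less.prems(1,2) False iN w_def])
      have S1B: "S1 \<subseteq> bitstrings N" unfolding S1_def using less.prems lw by (auto simp: bitstrings_def)
      have r2: "reach N S1 (insert y (S1 - {w}))"
        by (rule less.hyps[OF lt S1B]) (use less.prems wy in \<open>auto simp: S1_def\<close>)
      have "insert y (S1 - {w}) = insert y (S - {x})" unfolding S1_def using False by auto
      then show ?thesis using reach_trans[OF r1 r2] by simp
    next
      case True
      define S2 where "S2 = insert y (S - {w})"
      have r1: "reach N S S2" unfolding S2_def
        by (rule less.hyps[OF lt less.prems(1) True less.prems(3,4)])
      have S2B: "S2 \<subseteq> bitstrings N" unfolding S2_def using less.prems by (auto simp: bitstrings_def)
      have r2: "reach N S2 (insert w (S2 - {x}))"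
        by (rule move_adj[OF N3 S2B _ _ iN w_def]) (use less.prems wx wy in \<open>auto simp: S2_def\<close>)
      have "insert w (S2 - {x}) = insert y (S - {x})" unfolding S2_def using True wx wy \<open>x \<noteq> y\<close> by auto
      then show ?thesis using reach_trans[OF r1 r2] by simp
    qed
  qed
qed

lemma reach_all:
  assumes N3: "3 \<le> N"
  shows "finite S \<Longrightarrow> finite S' \<Longrightarrow> card S = card S' \<Longrightarrow> S \<subseteq> bitstrings N \<Longrightarrow> S' \<subseteq> bitstrings N
    \<Longrightarrow> reach N S S'"
proof (induction "card (S - S')" arbitrary: S)
  case 0
  then have "S \<subseteq> S'" by auto
  then have "S = S'" using 0 by (metis card_subset_eq)
  then show ?case by (simp add: reach_refl)
next
  case (Suc n)
  have "S - S' \<noteq> {}" using Suc.hyps(2) by (metis card.empty nat.distinct(1))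
  then obtain x where xS: "x \<in> S" "x \<notin> S'" by blast
  have "\<not> S' \<subseteq> S"
  proof
    assume "S' \<subseteq> S"
    then have "S' = S" using Suc.prems by (metis card_subset_eq)
    then show False using xS by simp
  qed
  then obtain y where yS: "y \<in> S'" "y \<notin> S" by auto
  define T where "T = insert y (S - {x})"
  have r1: "reach N S T" unfolding T_def
    by (rule move_gen[OF N3 Suc.prems(4) xS(1) yS(2)]) (use Suc.prems yS in \<open>auto simp: bitstrings_def\<close>)
  have "T - S' = (S - S') - {x}" unfolding T_def using yS by auto
  then have cT: "n = card (T - S')" using Suc.hyps(2) xS by simp
  have "card S > 0" using xS Suc.prems(1) by (auto simp: card_gt_0_iff)
  then have "card T = card S" unfolding T_def using xS yS Suc.prems by (simp add: card_insert_if)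
  have r2: "reach N T S'"
    by (rule Suc.hyps(1)[OF cT]) (use Suc.prems yS \<open>card T = card S\<close> in \<open>auto simp: T_def\<close>)
  show ?case by (rule reach_trans[OF r1 r2])
qed

theorem lemma3:
  fixes N m :: nat and S S' :: "bool list set"
  assumes "N \<ge> 3" and "1 \<le> m" and "m \<le> 2 ^ N - 2"
    and "S \<in> Sigma_m N m" and "S' \<in> Sigma_m N m"
  shows "\<exists>gs. set gs \<subseteq> gate_set N \<and> (apply_gates N gs) ` S = S'"
proof -
  have S: "S \<subseteq> bitstrings N" "card S = m" and S': "S' \<subseteq> bitstrings N" "card S' = m"
    using assms(4,5) unfolding Sigma_m_def by auto
  have "finite S" "finite S'" using S S' assms(2) by (auto intro: card_ge_0_finite)
  then have "reach N S S'" using reach_all[OF assms(1)] S S' by auto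
  then show ?thesis unfolding reach_def .
qed

end
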